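(* Let $G=(V,E)$ be a finite, connected, simple graph with generic weights $(w_x)_{x\in V\cup E}$ and ground state $M$. Let $v\in V$ and $e\in E$. If $e=(u,v)$ is inaccessible, then $e\notin M$. If $O(v)<0$, then $v\in M$.
   Context: A matching of $G$ is a set $M\subset V\cup E$ such that every vertex either belongs to $M$ or is an endpoint of exactly one edge of $M$, but not both; $H(M)=\sum_{x\in M}w_x$ and the ground state is the matching of minimal weight. Weights are generic if no nontrivial integer combination of finitely many weights vanishes. The optimality of a vertex $v$ is $O(v)=\max_{u\sim v}(w_u+w_v-w_{(u,v)})$, the maximum over neighbours $u$ of $v$. An edge $e=(u,v)$ is inaccessible if $w_e>w_u+w_v$. *)

theory Defs
  imports Complex_Main
begin

text \<open>Weights live on V \<union> E, encoded as
  elements of the sum type: Inl v for a vertex, Inr e for an edge.\<close>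

definition simple_graph :: "'v set \<Rightarrow> 'v set set \<Rightarrow> bool" where
  "simple_graph V E \<longleftrightarrow> finite V \<and>
     (\<forall>e\<in>E. \<exists>u v. e = {u, v} \<and> u \<noteq> v \<and> u \<in> V \<and> v \<in> V)"

definition connected_graph :: "'v set \<Rightarrow> 'v set set \<Rightarrow> bool" where
  "connected_graph V E \<longleftrightarrow> V \<noteq> {} \<and>
     (\<forall>u\<in>V. \<forall>v\<in>V. (\<lambda>x y. {x, y} \<in> E)\<^sup>*\<^sup>* u v)"

definition sites :: "'v set \<Rightarrow> 'v set set \<Rightarrow> ('v + 'v set) set" where
  "sites V E = Inl ` V \<union> Inr ` E"

definition generic_weights :: "'v set \<Rightarrow> 'v set set \<Rightarrow> ('v + 'v set \<Rightarrow> real) \<Rightarrow> bool" where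
  "generic_weights V E w \<longleftrightarrow>
     (\<forall>c :: ('v + 'v set) \<Rightarrow> int. \<forall>F. finite F \<longrightarrow> F \<subseteq> sites V E \<longrightarrow>
        (\<Sum>x\<in>F. real_of_int (c x) * w x) = 0 \<longrightarrow> (\<forall>x\<in>F. c x = 0))"

definition is_matching :: "'v set \<Rightarrow> 'v set set \<Rightarrow> ('v + 'v set) set \<Rightarrow> bool" where
  "is_matching V E M \<longleftrightarrow> M \<subseteq> sites V E \<and>
     (\<forall>v\<in>V. (Inl v \<in> M \<and> card {e\<in>E. v \<in> e \<and> Inr e \<in> M} = 0) \<or>
             (Inl v \<notin> M \<and> card {e\<in>E. v \<in> e \<and> Inr e \<in> M} = 1))"

definition H :: "('v + 'v set \<Rightarrow> real) \<Rightarrow> ('v + 'v set) set \<Rightarrow> real" where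
  "H w M = (\<Sum>x\<in>M. w x)"

definition ground_state :: "'v set \<Rightarrow> 'v set set \<Rightarrow> ('v + 'v set \<Rightarrow> real) \<Rightarrow> ('v + 'v set) set \<Rightarrow> bool" where
  "ground_state V E w M \<longleftrightarrow> is_matching V E M \<and>
     (\<forall>M'. is_matching V E M' \<longrightarrow> H w M \<le> H w M')"

definition optimality :: "'v set set \<Rightarrow> ('v + 'v set \<Rightarrow> real) \<Rightarrow> 'v \<Rightarrow> real" where
  "optimality E w v = Max {w (Inl u) + w (Inl v) - w (Inr {u, v}) | u. {u, v} \<in> E}"

definition inaccessible :: "('v + 'v set \<Rightarrow> real) \<Rightarrow> 'v set \<Rightarrow> bool" where
  "inaccessible w e \<longleftrightarrow> (\<exists>u v. e = {u, v} \<and> u \<noteq> v \<and> w (Inr e) > w (Inl u) + w (Inl v))"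

end

theory Submission
  imports Defs
begin

lemma finE: assumes "simple_graph V E" shows "finite E" "finite (sites V E)"
proof -
  have "E \<subseteq> Pow V" using assms unfolding simple_graph_def by auto
  moreover have "finite V" using assms unfolding simple_graph_def by auto
  ultimately show fe: "finite E" by (meson finite_Pow_iff finite_subset)
  show "finite (sites V E)" unfolding sites_def using fe \<open>finite V\<close> by simp
qed

lemma part1:
  assumes sg: "simple_graph V E" and gs: "ground_state V E w M"
    and eE: "e \<in> E" and ina: "inaccessible w e"
  shows "Inr e \<notin> M"
proof
  assume eM: "Inr e \<in> M"
  obtain a b where ab: "e = {a,b}" "a \<noteq> b" "w (Inr e) > w (Inl a) + w (Inl b)"
    using ina unfolding inaccessible_def by auto
  have "e \<subseteq> V"
  proof -
    obtain p q where "e = {p,q}" "p \<in> V" "q \<in> V" using sg eE unfolding simple_graph_def by blast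
    then show ?thesis by auto
  qed
  then have abV: "a \<in> V" "b \<in> V" using ab(1) by auto
  have fE: "finite E" and fS: "finite (sites V E)" using finE[OF sg] by auto
  have mat: "is_matching V E M" using gs unfolding ground_state_def by auto
  have MS: "M \<subseteq> sites V E" using mat unfolding is_matching_def by auto
  have fM: "finite M" using MS fS finite_subset by auto
  have key: "Inl x \<notin> M \<and> {f\<in>E. x \<in> f \<and> Inr f \<in> M} = {e}" if "x \<in> {a,b}" for x
  proof -
    have xV: "x \<in> V" using that abV by auto
    have ein: "e \<in> {f\<in>E. x \<in> f \<and> Inr f \<in> M}" using that ab eE eM by auto
    have fin: "finite {f\<in>E. x \<in> f \<and> Inr f \<in> M}" using fE by auto
    have "card {f\<in>E. x \<in> f \<and> Inr f \<in> M} \<noteq> 0" using ein fin by auto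
    then have c1: "Inl x \<notin> M" "card {f\<in>E. x \<in> f \<and> Inr f \<in> M} = 1"
      using mat xV unfolding is_matching_def by auto
    from c1(2) obtain z where "{f\<in>E. x \<in> f \<and> Inr f \<in> M} = {z}" by (rule card_1_singletonE)
    then show ?thesis using ein c1(1) by auto
  qed
  define M' where "M' = (M - {Inr e}) \<union> {Inl a, Inl b}"
  have "is_matching V E M'"
    unfolding is_matching_def
  proof (intro conjI ballI)
    show "M' \<subseteq> sites V E" using MS abV unfolding M'_def sites_def by auto
  next
    fix y assume yV: "y \<in> V"
    have eq: "{f\<in>E. y \<in> f \<and> Inr f \<in> M'} = {f\<in>E. y \<in> f \<and> Inr f \<in> M} - {e}"
      unfolding M'_def by auto
    show "(Inl y \<in> M' \<and> card {f\<in>E. y \<in> f \<and> Inr f \<in> M'} = 0) \<or>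
          (Inl y \<notin> M' \<and> card {f\<in>E. y \<in> f \<and> Inr f \<in> M'} = 1)"
    proof (cases "y \<in> {a,b}")
      case True
      then have e0: "{f\<in>E. y \<in> f \<and> Inr f \<in> M'} = {}" using key[OF True] eq by auto
      have c0: "card {f\<in>E. y \<in> f \<and> Inr f \<in> M'} = 0" unfolding e0 by (rule card.empty)
      have "Inl y \<in> M'" using True unfolding M'_def by auto
      then show ?thesis using c0 by blast
    next
      case False
      then have "{f\<in>E. y \<in> f \<and> Inr f \<in> M'} = {f\<in>E. y \<in> f \<and> Inr f \<in> M}"
        using eq ab(1) by auto
      moreover have "(Inl y \<in> M') = (Inl y \<in> M)" using False unfolding M'_def by auto
      ultimately show ?thesis using mat yV unfolding is_matching_def by auto
    qed
  qed
  then have le: "H w M \<le> H w M'" using gs unfolding ground_state_def by auto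
  have nab: "Inl a \<notin> M" "Inl b \<notin> M" using key by auto
  have "H w M' = (\<Sum>x\<in>M - {Inr e}. w x) + (\<Sum>x\<in>{Inl a, Inl b}. w x)"
    unfolding H_def M'_def using fM nab by (intro sum.union_disjoint) auto
  also have "(\<Sum>x\<in>M - {Inr e}. w x) = H w M - w (Inr e)"
    unfolding H_def using fM eM by (simp add: sum_diff1)
  also have "(\<Sum>x\<in>{Inl a, Inl b}. w x) = w (Inl a) + w (Inl b)" using ab(2) by simp
  finally show False using le ab(3) by linarith
qed

theorem lemma2p5:
  fixes V :: "'v set" and E :: "'v set set" and w :: "'v + 'v set \<Rightarrow> real"
    and M :: "('v + 'v set) set" and v :: 'v and e :: "'v set"
  assumes "simple_graph V E" and "connected_graph V E"
    and "generic_weights V E w" and "ground_state V E w M"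
    and "v \<in> V" and "e \<in> E"
  shows "(inaccessible w e \<longrightarrow> Inr e \<notin> M) \<and> (optimality E w v < 0 \<longrightarrow> Inl v \<in> M)"
proof (intro conjI impI)
  show "inaccessible w e \<Longrightarrow> Inr e \<notin> M" using part1 assms by blast
next
  assume Oneg: "optimality E w v < 0"
  show "Inl v \<in> M"
  proof (rule ccontr)
    assume nv: "Inl v \<notin> M"
    have fE: "finite E" using finE[OF assms(1)] by auto
    have mat: "is_matching V E M" using assms(4) unfolding ground_state_def by auto
    have "card {f\<in>E. v \<in> f \<and> Inr f \<in> M} = 1" using mat nv assms(5)
      unfolding is_matching_def by auto
    then obtain f0 where "{f\<in>E. v \<in> f \<and> Inr f \<in> M} = {f0}" by (rule card_1_singletonE)
    then have "f0 \<in> {f\<in>E. v \<in> f \<and> Inr f \<in> M}" by simp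
    then obtain f where f: "f \<in> E" "v \<in> f" "Inr f \<in> M" by blast
    obtain p q where pq: "f = {p,q}" "p \<noteq> q" using f(1) assms(1) unfolding simple_graph_def by blast
    obtain u where u: "f = {u,v}" "u \<noteq> v"
    proof (cases "p = v")
      case True then show ?thesis using that[of q] pq by auto
    next
      case False then have "q = v" using pq f(2) by auto
      then show ?thesis using that[of p] pq by auto
    qed
    let ?S = "{w (Inl u) + w (Inl v) - w (Inr {u, v}) | u. {u, v} \<in> E}"
    have finS: "finite ?S"
    proof -
      have sub: "{x. {x,v} \<in> E} \<subseteq> V"
      proof
        fix x assume "x \<in> {x. {x,v} \<in> E}"
        then have xe: "{x,v} \<in> E" by simp
        obtain p q where "{x,v} = {p,q}" "p \<in> V" "q \<in> V"
          using assms(1) xe unfolding simple_graph_def by blast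
        then show "x \<in> V" by (metis insertI1 insertE singletonD)
      qed
      have fV: "finite V" using assms(1) unfolding simple_graph_def by blast
      have "finite {x. {x,v} \<in> E}" using finite_subset[OF sub fV] .
      then have "finite ((\<lambda>x. w (Inl x) + w (Inl v) - w (Inr {x, v})) ` {x. {x,v} \<in> E})" by (rule finite_imageI)
      then show ?thesis by (simp only: setcompr_eq_image)
    qed
    have memS: "w (Inl u) + w (Inl v) - w (Inr {u, v}) \<in> ?S" using f(1) u(1) by auto
    have "w (Inl u) + w (Inl v) - w (Inr {u, v}) \<le> Max ?S" using Max_ge[OF finS memS] .
    then have le1: "w (Inl u) + w (Inl v) - w (Inr {u, v}) \<le> optimality E w v"
      unfolding optimality_def .
    have lt: "w (Inr f) > w (Inl u) + w (Inl v)" unfolding u(1) using le1 Oneg by linarith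
    have "inaccessible w f" unfolding inaccessible_def
      by (rule exI[of _ u], rule exI[of _ v]) (use lt u in auto)
    then show False using part1[OF assms(1) assms(4) f(1)] f(3) by blast
  qed
qed

end
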